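(* For every $i\in\mathbb{N}$, the family $\{\mathrm{bit}_i:\mathbb{Z}_n\to\{-1,1\}\}_{n>2^i}$ is concentrated.
   Context: $\mathbb{Z}_n=\{0,\dots,n-1\}$ with addition mod $n$. For $x\in\mathbb{Z}_n$ write its binary expansion $x=\sum_{j\ge0}x_j2^j$ with $x_j\in\{0,1\}$; then $\mathrm{bit}_i(x)=(-1)^{x_i}$. For $f:\mathbb{Z}_n\to\mathbb{C}$: $\langle f,g\rangle=\frac1n\sum_x f(x)\overline{g(x)}$, $\|f\|_2^2=\langle f,f\rangle$, $\chi_\alpha(x)=\exp(2\pi i\alpha x/n)$, $\widehat f(\alpha)=\langle f,\chi_\alpha\rangle$, and $f|_\Gamma=\sum_{\alpha\in\Gamma}\widehat f(\alpha)\chi_\alpha$ for $\Gamma\subseteq\mathbb{Z}_n$. A family of functions $f_n:\mathbb{Z}_{n}\to\mathbb{C}$ (indexed by $n$) is concentrated if there is a bivariate polynomial $P\in\mathbb{R}[x,y]$ such that for every index $n$ and every $\epsilon>0$ there is $\Gamma_n\subseteq\mathbb{Z}_{n}$ with $|\Gamma_n|\le P(\log(n),1/\epsilon)$ and $\|f_n-f_n|_{\Gamma_n}\|_2^2<\epsilon$. *)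

theory Defs
  imports Complex_Main
begin

text \<open>Elements of Z_n are represented by naturals x < n; functions Z_n -> C by
  functions nat => complex (only values on {..<n} matter).\<close>

definition bitf :: "nat \<Rightarrow> nat \<Rightarrow> complex" where
  "bitf i x = (-1) ^ ((x div 2 ^ i) mod 2)"

definition chi :: "nat \<Rightarrow> nat \<Rightarrow> nat \<Rightarrow> complex" where
  "chi n \<alpha> x = exp (2 * of_real pi * \<i> * of_nat \<alpha> * of_nat x / of_nat n)"

definition zinner :: "nat \<Rightarrow> (nat \<Rightarrow> complex) \<Rightarrow> (nat \<Rightarrow> complex) \<Rightarrow> complex" where
  "zinner n f g = (1 / of_nat n) * (\<Sum>x<n. f x * cnj (g x))"

definition znorm2sq :: "nat \<Rightarrow> (nat \<Rightarrow> complex) \<Rightarrow> real" where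
  "znorm2sq n f = Re (zinner n f f)"

definition fourier :: "nat \<Rightarrow> (nat \<Rightarrow> complex) \<Rightarrow> nat \<Rightarrow> complex" where
  "fourier n f \<alpha> = zinner n f (chi n \<alpha>)"

definition frestrict :: "nat \<Rightarrow> (nat \<Rightarrow> complex) \<Rightarrow> nat set \<Rightarrow> nat \<Rightarrow> complex" where
  "frestrict n f \<Gamma> = (\<lambda>x. \<Sum>\<alpha>\<in>\<Gamma>. fourier n f \<alpha> * chi n \<alpha> x)"

definition is_bipoly :: "(real \<Rightarrow> real \<Rightarrow> real) \<Rightarrow> bool" where
  "is_bipoly P \<longleftrightarrow> (\<exists>d (c :: nat \<Rightarrow> nat \<Rightarrow> real).
      \<forall>x y. P x y = (\<Sum>a\<le>d. \<Sum>b\<le>d. c a b * x ^ a * y ^ b))"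

definition concentrated :: "nat set \<Rightarrow> (nat \<Rightarrow> nat \<Rightarrow> complex) \<Rightarrow> bool" where
  "concentrated N f \<longleftrightarrow> (\<exists>P. is_bipoly P \<and>
     (\<forall>n\<in>N. \<forall>\<epsilon>>0. \<exists>\<Gamma>. \<Gamma> \<subseteq> {..<n} \<and>
        real (card \<Gamma>) \<le> P (ln (real n)) (1 / \<epsilon>) \<and>
        znorm2sq n (\<lambda>x. f n x - frestrict n (f n) \<Gamma> x) < \<epsilon>))"

end

theory Submission
  imports Defs "HOL-Analysis.Complex_Transcendental"
begin

definition ew :: "nat \<Rightarrow> int \<Rightarrow> complex" where
  "ew n k = exp (2 * of_real pi * \<i> * of_int k / of_nat n)"

lemma chi_ew: "chi n a x = ew n (int a * int x)"
  unfolding chi_def ew_def by (simp add: mult.assoc)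

lemma ew_add: "ew n (a + b) = ew n a * ew n b"
  unfolding ew_def by (simp add: exp_add[symmetric] add_divide_distrib ring_distribs)

lemma ew_cnj: "cnj (ew n k) = ew n (- k)"
  unfolding ew_def by (simp add: exp_cnj)

lemma ew_norm [simp]: "norm (ew n k) = 1"
  unfolding ew_def by simp

lemma ew_pow: "ew n k ^ x = ew n (k * int x)"
  unfolding ew_def by (simp add: exp_of_nat_mult[symmetric] mult_ac)

lemma ew_mult_n: "n > 0 \<Longrightarrow> ew n (k * int n) = 1"
proof -
  assume n: "n > 0"
  have "ew n (k * int n) = exp (of_int k * (2 * of_real pi * \<i>))"
    unfolding ew_def using n by (simp add: field_simps)
  also have "\<dots> = 1"
    by (simp add: exp_eq_1)
  finally show ?thesis .
qed

lemma ew_eq_1: "n > 0 \<Longrightarrow> ew n k = 1 \<Longrightarrow> int n dvd k"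
proof -
  assume n: "n > 0" and e: "ew n k = 1"
  then obtain j :: int where j: "2 * pi * k / n = of_int (2 * j) * pi"
    unfolding ew_def exp_eq_1 by auto
  then have "real_of_int k = real_of_int (j * int n)" using n pi_gt_zero
    by (simp add: field_simps)
  then have "k = j * int n" by linarith
  then show ?thesis by simp
qed

lemma ew_sum: "n > 0 \<Longrightarrow> (\<Sum>x<n. ew n (k * int x)) = (if int n dvd k then of_nat n else 0)"
proof -
  assume n: "n > 0"
  have "(\<Sum>x<n. ew n (k * int x)) = (\<Sum>x<n. ew n k ^ x)" by (simp add: ew_pow)
  also have "\<dots> = (if int n dvd k then of_nat n else 0)"
  proof (cases "int n dvd k")
    case True
    then obtain j where "k = j * int n" by (metis dvdE mult.commute)
    then have "ew n k = 1" using ew_mult_n n by simp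
    then show ?thesis using True by simp
  next
    case False
    then have "ew n k \<noteq> 1" using ew_eq_1 n by blast
    moreover have "ew n k ^ n = 1" using ew_pow ew_mult_n n by (metis mult.commute)
    ultimately show ?thesis using False by (simp add: sum_gp_strict)
  qed
  finally show ?thesis .
qed

lemma dvd_diff_lt: "x < n \<Longrightarrow> y < n \<Longrightarrow> int n dvd (int x - int y) \<longleftrightarrow> x = y"
proof
  assume "x < n" "y < n" "int n dvd (int x - int y)"
  then obtain q where q: "int x - int y = int n * q" by (auto elim: dvdE)
  show "x = y"
  proof (rule ccontr)
    assume "x \<noteq> y"
    then have "q \<noteq> 0" using q by auto
    then have "\<bar>int n * q\<bar> \<ge> int n" by (simp add: abs_mult mult_le_cancel_left1) (use \<open>q \<noteq> 0\<close> in linarith)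
    then show False using q \<open>x < n\<close> \<open>y < n\<close> by linarith
  qed
qed simp

lemma fourier_ew: "fourier n f a = (1 / of_nat n) * (\<Sum>y<n. f y * ew n (- (int a * int y)))"
  unfolding fourier_def zinner_def chi_ew ew_cnj by simp

lemma inversion:
  assumes n: "n > 0" and x: "x < n"
  shows "(\<Sum>a<n. fourier n f a * chi n a x) = f x"
proof -
  have "(\<Sum>a<n. fourier n f a * chi n a x)
      = (1 / of_nat n) * (\<Sum>a<n. \<Sum>y<n. f y * ew n ((int x - int y) * int a))"
    unfolding fourier_ew chi_ew
    by (simp add: sum_distrib_left sum_distrib_right mult_ac ew_add[symmetric] algebra_simps)
  also have "\<dots> = (1 / of_nat n) * (\<Sum>y<n. f y * (\<Sum>a<n. ew n ((int x - int y) * int a)))"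
    by (subst sum.swap) (simp add: sum_distrib_left)
  also have "\<dots> = (1 / of_nat n) * (\<Sum>y<n. (if y = x then f y * of_nat n else 0))"
    using n x by (intro arg_cong[where f="\<lambda>t. _ * t"] sum.cong refl) (auto simp: ew_sum dvd_diff_lt)
  also have "\<dots> = f x" using n x by simp
  finally show ?thesis .
qed

lemma norm_sum_chars:
  assumes n: "n > 0" and S: "S \<subseteq> {..<n}"
  shows "zinner n (\<lambda>x. \<Sum>a\<in>S. c a * chi n a x) (\<lambda>x. \<Sum>a\<in>S. c a * chi n a x)
       = (\<Sum>a\<in>S. of_real ((cmod (c a))^2))"
proof -
  have fS: "finite S" using S finite_subset by blast
  have "zinner n (\<lambda>x. \<Sum>a\<in>S. c a * chi n a x) (\<lambda>x. \<Sum>a\<in>S. c a * chi n a x)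
     = (1 / of_nat n) * (\<Sum>a\<in>S. \<Sum>b\<in>S. c a * cnj (c b) * (\<Sum>x<n. ew n ((int a - int b) * int x)))"
  proof -
    have t: "\<And>x. (\<Sum>a\<in>S. c a * chi n a x) * cnj (\<Sum>a\<in>S. c a * chi n a x)
        = (\<Sum>a\<in>S. \<Sum>b\<in>S. c a * cnj (c b) * ew n ((int a - int b) * int x))"
      unfolding chi_ew cnj_sum sum_product
      by (intro sum.cong refl) (simp add: ew_cnj ew_add[symmetric] algebra_simps)
    have "(\<Sum>x<n. \<Sum>a\<in>S. \<Sum>b\<in>S. c a * cnj (c b) * ew n ((int a - int b) * int x))
       = (\<Sum>a\<in>S. \<Sum>x<n. \<Sum>b\<in>S. c a * cnj (c b) * ew n ((int a - int b) * int x))"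
      by (rule sum.swap)
    also have "\<dots> = (\<Sum>a\<in>S. \<Sum>b\<in>S. \<Sum>x<n. c a * cnj (c b) * ew n ((int a - int b) * int x))"
      by (intro sum.cong refl sum.swap)
    also have "\<dots> = (\<Sum>a\<in>S. \<Sum>b\<in>S. c a * cnj (c b) * (\<Sum>x<n. ew n ((int a - int b) * int x)))"
      by (simp add: sum_distrib_left)
    finally show ?thesis unfolding zinner_def t by simp
  qed
  also have "\<dots> = (1 / of_nat n) * (\<Sum>a\<in>S. \<Sum>b\<in>S. if b = a then c a * cnj (c a) * of_nat n else 0)"
  proof -
    have "\<And>a b. a \<in> S \<Longrightarrow> b \<in> S \<Longrightarrow> int n dvd (int a - int b) \<longleftrightarrow> b = a"
      using S dvd_diff_lt by blast
    then show ?thesis using n by (intro arg_cong[where f="\<lambda>t. _ * t"] sum.cong refl) (auto simp: ew_sum)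
  qed
  also have "\<dots> = (\<Sum>a\<in>S. c a * cnj (c a))"
    using n fS by (simp add: sum_distrib_left)
  also have "\<dots> = (\<Sum>a\<in>S. of_real ((cmod (c a))^2))"
    by (simp only: complex_norm_square)
  finally show ?thesis .
qed

lemma parseval_err:
  assumes n: "n > 0" and G: "G \<subseteq> {..<n}"
  shows "znorm2sq n (\<lambda>x. f x - frestrict n f G x) = (\<Sum>a\<in>{..<n} - G. (cmod (fourier n f a))^2)"
proof -
  have eq: "zinner n (\<lambda>x. f x - frestrict n f G x) (\<lambda>x. f x - frestrict n f G x)
      = zinner n (\<lambda>x. \<Sum>a\<in>{..<n} - G. fourier n f a * chi n a x) (\<lambda>x. \<Sum>a\<in>{..<n} - G. fourier n f a * chi n a x)"
  proof -
    have "\<And>x. x < n \<Longrightarrow> f x - frestrict n f G x = (\<Sum>a\<in>{..<n} - G. fourier n f a * chi n a x)"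
    proof -
      fix x assume "x < n"
      have "(\<Sum>a<n. fourier n f a * chi n a x) = (\<Sum>a\<in>{..<n} - G. fourier n f a * chi n a x) + frestrict n f G x"
        unfolding frestrict_def using G by (intro sum.subset_diff) auto
      then show "f x - frestrict n f G x = (\<Sum>a\<in>{..<n} - G. fourier n f a * chi n a x)"
        using inversion[OF n \<open>x < n\<close>] by simp
    qed
    then show ?thesis unfolding zinner_def by (intro arg_cong[where f="\<lambda>t. _ * t"] sum.cong) auto
  qed
  show ?thesis unfolding znorm2sq_def eq
    by (subst norm_sum_chars[OF n]) auto
qed

lemma bitf_periodic: "bitf i (x + 2 ^ Suc i) = bitf i x"
proof -
  have "(x + 2 ^ Suc i) div 2 ^ i = x div 2 ^ i + 2" by simp
  then show ?thesis unfolding bitf_def by simp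
qed

lemma norm_bitf [simp]: "norm (bitf i x) = 1"
  unfolding bitf_def by (simp add: norm_power)

lemma sum_shift: fixes m :: nat shows "(\<Sum>x<n + m. g x) = (\<Sum>x<n. g x) + (\<Sum>x<m. g (x + n))"
  by (induction m) (auto simp: add_ac)

lemma coef_bound:
  assumes n: "n > 0"
  shows "cmod (fourier n (bitf i) a) * cmod (1 - ew n (- (int a * int (2 ^ Suc i)))) \<le> 2 * 2 ^ Suc i / n"
proof -
  define m :: nat where "m = 2 ^ Suc i"
  define z where "z = ew n (- int a)"
  define g where "g x = bitf i x * z ^ x" for x
  define S where "S = (\<Sum>x<n. g x)"
  have F: "fourier n (bitf i) a = S / of_nat n"
    unfolding fourier_ew S_def g_def z_def ew_pow by simp
  have zm: "z ^ m = ew n (- (int a * int m))" unfolding z_def ew_pow by simp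
  have gm: "g (x + m) = z ^ m * g x" for x
    unfolding g_def m_def using bitf_periodic[of i x] by (simp add: power_add mult_ac)
  have "S + (\<Sum>x<m. g (x + n)) = (\<Sum>x<m. g x) + (\<Sum>x<n. g (x + m))"
    unfolding S_def using sum_shift[of g n m] sum_shift[of g m n] by (simp add: add.commute)
  also have "(\<Sum>x<n. g (x + m)) = z ^ m * S" unfolding gm S_def by (simp add: sum_distrib_left)
  finally have eq: "S * (1 - z ^ m) = (\<Sum>x<m. g x) - (\<Sum>x<m. g (x + n))"
    by (simp add: algebra_simps)
  have ng: "norm (g x) = 1" for x unfolding g_def z_def by (simp add: norm_mult norm_power)
  have b1: "norm (\<Sum>x<m. g x) \<le> m"
    using norm_sum[of g "{..<m}"] ng by simp
  have b2: "norm (\<Sum>x<m. g (x + n)) \<le> m"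
    using norm_sum[of "\<lambda>x. g (x + n)" "{..<m}"] ng by simp
  have "cmod S * cmod (1 - z ^ m) \<le> 2 * m"
    using norm_triangle_ineq4[of "\<Sum>x<m. g x" "\<Sum>x<m. g (x + n)"] b1 b2
    unfolding norm_mult[symmetric] eq by linarith
  then have "cmod S / n * cmod (1 - z ^ m) \<le> 2 * m / n"
    using n by (simp add: divide_right_mono)
  then have "cmod S / n * cmod (1 - ew n (- (int a * int m))) \<le> 2 * m / n"
    by (simp only: zm)
  then show ?thesis unfolding F m_def by (simp add: norm_divide)
qed

lemma cos_lower:
  fixes x :: real assumes "x \<ge> 0" shows "cos x \<ge> 1 - x^2 / 2"
proof -
  let ?f = "\<lambda>x. cos x - 1 + x^2 / 2"
  have "\<And>u. \<lbrakk>0 \<le> u; u \<le> x\<rbrakk> \<Longrightarrow> (?f has_real_derivative (u - sin u)) (at u)"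
    by (auto intro!: derivative_eq_intros simp: field_simps)
  moreover have "\<And>u. \<lbrakk>0 \<le> u; u \<le> x\<rbrakk> \<Longrightarrow> 0 \<le> u - sin u"
    using sin_x_le_x by simp
  ultimately have "?f x \<ge> ?f 0"
    by (intro DERIV_nonneg_imp_nondecreasing[OF assms]) blast
  then show ?thesis by simp
qed

lemma sin_lower:
  fixes x :: real assumes "x \<ge> 0" shows "sin x \<ge> x - x^3 / 6"
proof -
  let ?f = "\<lambda>x. sin x - x + x^3 / 6"
  have "\<And>u. \<lbrakk>0 \<le> u; u \<le> x\<rbrakk> \<Longrightarrow> (?f has_real_derivative (cos u - 1 + u^2/2)) (at u)"
    by (auto intro!: derivative_eq_intros simp: field_simps power2_eq_square)
  moreover have "\<And>u. \<lbrakk>0 \<le> u; u \<le> x\<rbrakk> \<Longrightarrow> 0 \<le> cos u - 1 + u^2/2"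
    using cos_lower by fastforce
  ultimately have "?f x \<ge> ?f 0"
    by (intro DERIV_nonneg_imp_nondecreasing[OF assms]) blast
  then show ?thesis by simp
qed

lemma sin_third:
  fixes x :: real assumes "0 \<le> x" "x \<le> pi / 2" shows "sin x \<ge> x / 3"
proof -
  have "x < 2" using assms pi_less_4 by linarith
  then have "x^2 \<le> 2^2" using assms by (intro power_mono) auto
  then have "x^2 \<le> 4" by simp
  then have "x^2 * x \<le> 4 * x" using assms by (intro mult_right_mono) auto
  then have "x^3 / 6 \<le> 4 * x / 6"
    by (simp add: power3_eq_cube power2_eq_square mult_ac)
  then show ?thesis using sin_lower[OF assms(1)] by linarith
qed

lemma ew_lower:
  assumes n: "n > 0" and v: "2 * \<bar>v\<bar> \<le> int n"
  shows "(cmod (1 - ew n v))^2 \<ge> 4 * (real_of_int v)^2 / (real n)^2"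
proof -
  define y where "y = pi * v / n"
  have ew: "ew n v = cis (2 * y)"
    unfolding ew_def y_def cis_conv_exp by (simp add: field_simps)
  have "(cmod (1 - ew n v))^2 = (1 - cos (2*y))^2 + (sin (2*y))^2"
    unfolding ew cmod_power2 by simp
  also have "\<dots> = 2 - 2 * cos (2*y)"
    using sin_cos_squared_add[of "2*y"] by (simp add: power2_eq_square algebra_simps)
  also have "\<dots> = 4 * (sin \<bar>y\<bar>)^2"
    unfolding cos_double_sin by (simp add: abs_if)
  finally have eq: "(cmod (1 - ew n v))^2 = 4 * (sin \<bar>y\<bar>)^2" .
  have ay: "\<bar>y\<bar> = pi * \<bar>v\<bar> / n" unfolding y_def by (simp add: abs_mult)
  have "\<bar>y\<bar> \<le> pi / 2"
  proof -
    have "real_of_int \<bar>v\<bar> \<le> real n / 2" using v by linarith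
    then have "pi * \<bar>v\<bar> \<le> pi * (real n / 2)" by (simp add: mult_left_mono)
    then show ?thesis unfolding ay using n by (simp add: field_simps)
  qed
  then have s: "sin \<bar>y\<bar> \<ge> \<bar>y\<bar> / 3" by (intro sin_third) auto
  have "\<bar>y\<bar> / 3 \<ge> \<bar>v\<bar> / n"
  proof -
    have "pi * \<bar>v\<bar> \<ge> 3 * \<bar>v\<bar>" using pi_gt3 by (simp add: mult_right_mono)
    then show ?thesis unfolding ay using n by (simp add: field_simps)
  qed
  with s have "sin \<bar>y\<bar> \<ge> \<bar>v\<bar> / n" by linarith
  then have "(sin \<bar>y\<bar>)^2 \<ge> (\<bar>v\<bar> / n)^2" by (intro power_mono) auto
  then show ?thesis unfolding eq by (simp add: power_divide)
qed

lemma tel_aux: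
  fixes T :: nat assumes T: "T \<ge> 2"
  shows "(\<Sum>j\<in>{T..<N}. 1 / (real j)^2) \<le> 1 / (real T - 1) - 1 / (real (max N T) - 1)"
proof (induction N)
  case 0 then show ?case using T by simp
next
  case (Suc N)
  show ?case
  proof (cases "N < T")
    case True
    then have "{T..<Suc N} = {}" by auto
    moreover have "max (Suc N) T = T" using True by simp
    ultimately show ?thesis by simp
  next
    case False
    then have NT: "N \<ge> T" by simp
    have e: "{T..<Suc N} = insert N {T..<N}" using NT by auto
    have "(\<Sum>j\<in>{T..<Suc N}. 1 / (real j)^2) = 1 / (real N)^2 + (\<Sum>j\<in>{T..<N}. 1 / (real j)^2)"
      unfolding e by simp
    also have "\<dots> \<le> 1 / (real N)^2 + (1 / (real T - 1) - 1 / (real N - 1))"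
      using Suc.IH NT by (simp add: max_def)
    also have "\<dots> \<le> 1 / (real T - 1) - 1 / (real N)"
    proof -
      have N2: "real N \<ge> 2" using NT T by linarith
      have "1 / (real N)^2 \<le> 1 / (real N - 1) - 1 / real N"
        using N2 by (simp add: field_simps power2_eq_square)
      then show ?thesis by linarith
    qed
    also have "\<dots> = 1 / (real T - 1) - 1 / (real (max (Suc N) T) - 1)"
      using NT by (simp add: max_def)
    finally show ?thesis .
  qed
qed

lemma tel:
  fixes T :: nat assumes T: "T \<ge> 2" and B: "finite B" "\<forall>j\<in>B. T \<le> j"
  shows "(\<Sum>j\<in>B. 1 / (real j)^2) \<le> 1 / (real T - 1)"
proof (cases "B = {}")
  case True then show ?thesis using T by simp
next
  case False
  have sub: "B \<subseteq> {T..<Suc (Max B)}" using B by (auto simp: Max_ge less_Suc_eq_le)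
  have "(\<Sum>j\<in>B. 1 / (real j)^2) \<le> (\<Sum>j\<in>{T..<Suc (Max B)}. 1 / (real j)^2)"
    by (rule sum_mono2[OF _ sub]) auto
  also have "\<dots> \<le> 1 / (real T - 1) - 1 / (real (max (Suc (Max B)) T) - 1)"
    by (rule tel_aux[OF T])
  also have "\<dots> \<le> 1 / (real T - 1)"
  proof -
    have "real (max (Suc (Max B)) T) - 1 \<ge> 1" using T by simp
    then show ?thesis by simp
  qed
  finally show ?thesis .
qed

lemma tel_inj:
  fixes T :: nat assumes T: "T \<ge> 2" and A: "finite A" and inj: "inj_on h A" and hT: "\<forall>a\<in>A. T \<le> h a"
  shows "(\<Sum>a\<in>A. 1 / (real (h a))^2) \<le> 1 / (real T - 1)"
proof -
  have "(\<Sum>a\<in>A. 1 / (real (h a))^2) = (\<Sum>j\<in>h ` A. 1 / (real j)^2)"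
    by (simp add: sum.reindex[OF inj])
  also have "\<dots> \<le> 1 / (real T - 1)" using A hT by (intro tel[OF T]) auto
  finally show ?thesis .
qed

lemma inner_tail:
  fixes T m k n :: nat assumes T: "T \<ge> 2" and m: "m > 0"
  shows "(\<Sum>a\<in>{a. a < n \<and> int T \<le> \<bar>int a * int m - int k * int n\<bar>}.
            1 / (real_of_int (int a * int m - int k * int n))^2) \<le> 2 / (real T - 1)"
proof -
  define v where "v a = int a * int m - int k * int n" for a
  define A1 where "A1 = {a. a < n \<and> int T \<le> v a}"
  define A2 where "A2 = {a. a < n \<and> int T \<le> - v a}"
  have eqA: "{a. a < n \<and> int T \<le> \<bar>int a * int m - int k * int n\<bar>} = A1 \<union> A2"
    unfolding A1_def A2_def v_def by auto
  have disj: "A1 \<inter> A2 = {}" unfolding A1_def A2_def using T by auto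
  have fin1: "finite A1" and fin2: "finite A2" unfolding A1_def A2_def by auto
  have s1: "(\<Sum>a\<in>A1. 1 / (real_of_int (v a))^2) \<le> 1 / (real T - 1)"
  proof -
    have "(\<Sum>a\<in>A1. 1 / (real_of_int (v a))^2) = (\<Sum>a\<in>A1. 1 / (real (nat (v a)))^2)"
      by (intro sum.cong refl) (auto simp: A1_def)
    also have "\<dots> \<le> 1 / (real T - 1)"
    proof (rule tel_inj[OF T fin1])
      show "inj_on (\<lambda>a. nat (v a)) A1"
      proof (rule inj_onI)
        fix x y assume x: "x \<in> A1" and y: "y \<in> A1" and e: "nat (v x) = nat (v y)"
        have "v x = v y" using x y e T unfolding A1_def by (subst (asm) eq_nat_nat_iff) auto
        then have "int x * int m = int y * int m" unfolding v_def by simp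
        then show "x = y" using m by simp
      qed
      show "\<forall>a\<in>A1. T \<le> nat (v a)" unfolding A1_def by auto
    qed
    finally show ?thesis .
  qed
  have s2: "(\<Sum>a\<in>A2. 1 / (real_of_int (v a))^2) \<le> 1 / (real T - 1)"
  proof -
    have "(\<Sum>a\<in>A2. 1 / (real_of_int (v a))^2) = (\<Sum>a\<in>A2. 1 / (real (nat (- v a)))^2)"
      by (intro sum.cong refl) (auto simp: A2_def)
    also have "\<dots> \<le> 1 / (real T - 1)"
    proof (rule tel_inj[OF T fin2])
      show "inj_on (\<lambda>a. nat (- v a)) A2"
      proof (rule inj_onI)
        fix x y assume x: "x \<in> A2" and y: "y \<in> A2" and e: "nat (- v x) = nat (- v y)"
        have "- v x = - v y" using x y e T unfolding A2_def by (subst (asm) eq_nat_nat_iff) auto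
        then have "int x * int m = int y * int m" unfolding v_def by simp
        then show "x = y" using m by simp
      qed
      show "\<forall>a\<in>A2. T \<le> nat (- v a)" unfolding A2_def by auto
    qed
    finally show ?thesis .
  qed
  have eqA': "{a. a < n \<and> int T \<le> \<bar>int a * int m - int k * int n\<bar>} = A1 \<union> A2" by (fact eqA)
  have "(\<Sum>a\<in>{a. a < n \<and> int T \<le> \<bar>int a * int m - int k * int n\<bar>}.
            1 / (real_of_int (int a * int m - int k * int n))^2)
        = (\<Sum>a\<in>A1 \<union> A2. 1 / (real_of_int (v a))^2)"
    unfolding eqA' v_def by simp
  also have "\<dots> = (\<Sum>a\<in>A1. 1 / (real_of_int (v a))^2) + (\<Sum>a\<in>A2. 1 / (real_of_int (v a))^2)"
    by (rule sum.union_disjoint[OF fin1 fin2 disj])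
  also have "\<dots> \<le> 2 / (real T - 1)" using s1 s2 by simp
  finally show ?thesis .
qed

lemma rounding:
  fixes a m n :: nat assumes n: "n > 0" and a: "a < n"
  shows "\<exists>kk::int. 0 \<le> kk \<and> kk \<le> int m \<and> 2 * \<bar>int a * int m - kk * int n\<bar> \<le> int n"
proof -
  define A where "A = 2 * (int a * int m) + int n"
  define kk where "kk = A div (2 * int n)"
  have d: "A = 2 * int n * kk + A mod (2 * int n)" unfolding kk_def by simp
  have r: "0 \<le> A mod (2 * int n)" "A mod (2 * int n) < 2 * int n" using n by auto
  have A0: "A \<ge> 0" unfolding A_def by simp
  have "(int a + 1) * int m \<le> int n * int m" using a by (intro mult_right_mono) auto
  then have h: "int a * int m + int m \<le> int n * int m" by (simp add: algebra_simps)
  have e2: "2 * int n * (int m + 1) = 2 * (int n * int m) + 2 * int n" by (simp add: algebra_simps)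
  have Alt: "A < 2 * int n * (int m + 1)" unfolding A_def e2 using h n by linarith
  have k0: "0 \<le> kk" unfolding kk_def using A0 n by (simp add: pos_imp_zdiv_nonneg_iff)
  have "2 * int n * kk < 2 * int n * (int m + 1)" using d r Alt by linarith
  then have km: "kk \<le> int m" using n by (simp add: mult_less_cancel_left)
  have "2 * (int a * int m - kk * int n) = A mod (2 * int n) - int n"
    using d unfolding A_def by (simp add: algebra_simps)
  then have "2 * \<bar>int a * int m - kk * int n\<bar> \<le> int n" using r by linarith
  then show ?thesis using k0 km by blast
qed

lemma point_bound:
  assumes n: "n > 0" and v: "2 * \<bar>int a * int (2 ^ Suc i) - kk * int n\<bar> \<le> int n"
    and v0: "int a * int (2 ^ Suc i) - kk * int n \<noteq> 0"
  shows "(cmod (fourier n (bitf i) a))^2 \<le> (real (2 ^ Suc i))^2 / (real_of_int (int a * int (2 ^ Suc i) - kk * int n))^2"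
proof -
  define m :: nat where "m = 2 ^ Suc i"
  define w where "w = int a * int m - kk * int n"
  define c where "c = cmod (1 - ew n (- (int a * int m)))"
  define F where "F = cmod (fourier n (bitf i) a)"
  have cb: "F * c \<le> 2 * m / n" unfolding F_def c_def m_def using coef_bound[OF n] by simp
  have "ew n (- (int a * int m)) = ew n (- w) * ew n ((- kk) * int n)"
    unfolding w_def ew_add[symmetric] by (simp add: algebra_simps)
  moreover have "ew n ((- kk) * int n) = 1" using ew_mult_n[OF n] by blast
  ultimately have "ew n (- (int a * int m)) = ew n (- w)" by simp
  moreover have "2 * \<bar>- w\<bar> \<le> int n" using v unfolding w_def m_def by (simp only: abs_minus_cancel)
  ultimately have c2: "c^2 \<ge> 4 * (real_of_int (- w))^2 / (real n)^2"
    unfolding c_def using ew_lower[OF n, of "- w"] by simp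
  then have c2: "c^2 \<ge> 4 * (real_of_int w)^2 / (real n)^2" by simp
  have "w \<noteq> 0" using v0 unfolding w_def m_def by simp
  then have wpos: "(real_of_int w)^2 > 0" by simp
  have F0: "F \<ge> 0" "c \<ge> 0" unfolding F_def c_def by auto
  have "(F * c)^2 \<le> (2 * m / n)^2" using cb F0 by (intro power_mono) auto
  then have "F^2 * c^2 \<le> 4 * m^2 / n^2" by (simp add: power_mult_distrib power_divide)
  moreover have "F^2 * (4 * (real_of_int w)^2 / (real n)^2) \<le> F^2 * c^2"
    using c2 by (intro mult_left_mono) auto
  ultimately have "F^2 * (4 * (real_of_int w)^2 / (real n)^2) \<le> 4 * m^2 / n^2" by linarith
  then have "F^2 * (real_of_int w)^2 \<le> m^2" using n by (simp add: field_simps)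
  then have "F^2 \<le> m^2 / (real_of_int w)^2" using wpos by (simp add: field_simps)
  then show ?thesis unfolding F_def w_def m_def by simp
qed

theorem corollary6p5:
  fixes i :: nat
  shows "concentrated {n. n > 2 ^ i} (\<lambda>n. bitf i)"
proof -
  define m :: nat where "m = 2 ^ Suc i"
  have m0: "m > 0" unfolding m_def by simp
  define K :: real where "K = 2 * (real m)^2 * (real m + 1)"
  have K0: "K > 0" unfolding K_def using m0 by simp
  define P :: "real \<Rightarrow> real \<Rightarrow> real" where "P = (\<lambda>x y. 6 * (real m + 1) + 2 * (real m + 1) * K * y)"
  have bip: "is_bipoly P"
    unfolding is_bipoly_def
    apply (rule exI[of _ 1])
    apply (rule exI[of _ "\<lambda>a b. if a = 0 \<and> b = 0 then 6 * (real m + 1) else if a = 0 \<and> b = 1 then 2 * (real m + 1) * K else 0"])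
    by (simp add: P_def One_nat_def atMost_Suc)
  have main: "\<forall>n\<in>{n. n > 2 ^ i}. \<forall>\<epsilon>>0. \<exists>\<Gamma>. \<Gamma> \<subseteq> {..<n} \<and>
        real (card \<Gamma>) \<le> P (ln (real n)) (1 / \<epsilon>) \<and>
        znorm2sq n (\<lambda>x. bitf i x - frestrict n (bitf i) \<Gamma> x) < \<epsilon>"
  proof (intro ballI allI impI)
    fix n :: nat and \<epsilon> :: real
    assume nI: "n \<in> {n. n > 2 ^ i}" and e: "\<epsilon> > 0"
    have n: "n > 0" using nI by auto
    define T :: nat where "T = nat \<lceil>K / \<epsilon>\<rceil> + 2"
    have T2: "T \<ge> 2" unfolding T_def by simp
    have KT: "real T - 1 > K / \<epsilon>"
    proof -
      have "real (nat \<lceil>K / \<epsilon>\<rceil>) \<ge> K / \<epsilon>"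
        by (rule real_nat_ceiling_ge)
      then show ?thesis unfolding T_def by simp
    qed
    have Tle: "real T \<le> K / \<epsilon> + 3"
    proof -
      have "K / \<epsilon> \<ge> 0" using K0 e by simp
      then have "real (nat \<lceil>K / \<epsilon>\<rceil>) = of_int \<lceil>K / \<epsilon>\<rceil>" by simp
      then have "real (nat \<lceil>K / \<epsilon>\<rceil>) \<le> K / \<epsilon> + 1" using of_int_ceiling_le_add_one[of "K / \<epsilon>"] by linarith
      then show ?thesis unfolding T_def by simp
    qed
    define v where "v a k = int a * int m - int k * int n" for a k :: nat
    define G where "G = {a. a < n \<and> (\<exists>k\<le>m. \<bar>v a k\<bar> < int T)}"
    have Gsub: "G \<subseteq> {..<n}" unfolding G_def by auto
    have cardk: "card {a. a < n \<and> \<bar>v a k\<bar> < int T} \<le> 2 * T" for k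
    proof -
      have "card {a. a < n \<and> \<bar>v a k\<bar> < int T} \<le> card {..<2 * T}"
      proof (rule card_inj_on_le)
        show "inj_on (\<lambda>a. nat (v a k + int T)) {a. a < n \<and> \<bar>v a k\<bar> < int T}"
        proof (rule inj_onI)
          fix x y assume x: "x \<in> {a. a < n \<and> \<bar>v a k\<bar> < int T}" and y: "y \<in> {a. a < n \<and> \<bar>v a k\<bar> < int T}"
            and eq: "nat (v x k + int T) = nat (v y k + int T)"
          have "v x k + int T = v y k + int T" using x y eq by (subst (asm) eq_nat_nat_iff) auto
          then have "int x * int m = int y * int m" unfolding v_def by simp
          then show "x = y" using m0 by simp
        qed
        show "(\<lambda>a. nat (v a k + int T)) ` {a. a < n \<and> \<bar>v a k\<bar> < int T} \<subseteq> {..<2 * T}"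
          by auto
      qed auto
      then show ?thesis by simp
    qed
    have "card G \<le> card (\<Union>k\<in>{..m}. {a. a < n \<and> \<bar>v a k\<bar> < int T})"
      by (rule card_mono) (auto simp: G_def)
    also have "\<dots> \<le> (\<Sum>k\<in>{..m}. card {a. a < n \<and> \<bar>v a k\<bar> < int T})"
      by (rule card_UN_le) simp
    also have "\<dots> \<le> (\<Sum>k\<in>{..m}. 2 * T)" by (rule sum_mono) (rule cardk)
    also have "\<dots> = (m + 1) * (2 * T)" by simp
    finally have "real (card G) \<le> real ((m + 1) * (2 * T))" by (simp only: of_nat_le_iff)
    then have cG: "real (card G) \<le> (real m + 1) * (2 * real T)" by (simp add: algebra_simps)
    also have "\<dots> \<le> (real m + 1) * (2 * (K / \<epsilon> + 3))" using Tle by (intro mult_left_mono) auto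
    also have "\<dots> = P (ln (real n)) (1 / \<epsilon>)" unfolding P_def by (simp add: algebra_simps add_divide_distrib)
    finally have card_ok: "real (card G) \<le> P (ln (real n)) (1 / \<epsilon>)" .
    define h where "h a k = (if int T \<le> \<bar>v a k\<bar> then (real m)^2 / (real_of_int (v a k))^2 else 0)" for a k
    have h0: "h a k \<ge> 0" for a k unfolding h_def by simp
    have pt: "(cmod (fourier n (bitf i) a))^2 \<le> (\<Sum>k\<in>{..m}. h a k)" if a: "a \<in> {..<n} - G" for a
    proof -
      have an: "a < n" using a by simp
      obtain kk :: int where kk: "0 \<le> kk" "kk \<le> int m" "2 * \<bar>int a * int m - kk * int n\<bar> \<le> int n"
        using rounding[OF n an] by blast
      define k0 where "k0 = nat kk"
      have k0m: "k0 \<in> {..m}" unfolding k0_def using kk by simp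
      have vk: "v a k0 = int a * int m - kk * int n" unfolding v_def k0_def using kk by simp
      have "\<not> \<bar>v a k0\<bar> < int T" using a k0m unfolding G_def by auto
      then have vT: "int T \<le> \<bar>v a k0\<bar>" by simp
      then have v0: "v a k0 \<noteq> 0" using T2 by auto
      have "(cmod (fourier n (bitf i) a))^2 \<le> (real m)^2 / (real_of_int (v a k0))^2"
        using point_bound[OF n, of a i kk] kk v0 unfolding vk m_def by simp
      also have "\<dots> = h a k0" unfolding h_def using vT by simp
      also have "\<dots> \<le> (\<Sum>k\<in>{..m}. h a k)"
        by (rule member_le_sum[OF k0m]) (auto simp: h0)
      finally show ?thesis .
    qed
    have "znorm2sq n (\<lambda>x. bitf i x - frestrict n (bitf i) G x) = (\<Sum>a\<in>{..<n} - G. (cmod (fourier n (bitf i) a))^2)"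
      by (rule parseval_err[OF n Gsub])
    also have "\<dots> \<le> (\<Sum>a\<in>{..<n} - G. \<Sum>k\<in>{..m}. h a k)"
      by (rule sum_mono) (rule pt)
    also have "\<dots> \<le> (\<Sum>a\<in>{..<n}. \<Sum>k\<in>{..m}. h a k)"
      by (rule sum_mono2) (auto intro: sum_nonneg h0)
    also have "\<dots> = (\<Sum>k\<in>{..m}. \<Sum>a\<in>{..<n}. h a k)" by (rule sum.swap)
    also have "\<dots> \<le> (\<Sum>k\<in>{..m}. (real m)^2 * (2 / (real T - 1)))"
    proof (rule sum_mono)
      fix k assume "k \<in> {..m}"
      have "(\<Sum>a\<in>{..<n}. h a k) = (\<Sum>a\<in>{a \<in> {..<n}. int T \<le> \<bar>v a k\<bar>}. (real m)^2 / (real_of_int (v a k))^2)"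
        unfolding h_def by (rule sum.inter_filter[symmetric]) simp
      also have "{a \<in> {..<n}. int T \<le> \<bar>v a k\<bar>} = {a. a < n \<and> int T \<le> \<bar>int a * int m - int k * int n\<bar>}"
        unfolding v_def by auto
      also have "(\<Sum>a\<in>{a. a < n \<and> int T \<le> \<bar>int a * int m - int k * int n\<bar>}. (real m)^2 / (real_of_int (v a k))^2)
          = (real m)^2 * (\<Sum>a\<in>{a. a < n \<and> int T \<le> \<bar>int a * int m - int k * int n\<bar>}.
               1 / (real_of_int (int a * int m - int k * int n))^2)"
        unfolding v_def by (simp add: sum_distrib_left)
      also have "\<dots> \<le> (real m)^2 * (2 / (real T - 1))"
        by (intro mult_left_mono inner_tail[OF T2 m0]) simp
      finally show "(\<Sum>a\<in>{..<n}. h a k) \<le> (real m)^2 * (2 / (real T - 1))" .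
    qed
    also have "\<dots> = K / (real T - 1)" unfolding K_def by (simp add: field_simps)
    also have "\<dots> < \<epsilon>"
    proof -
      have pos: "real T - 1 > 0" using T2 by simp
      have "K < \<epsilon> * (real T - 1)" using KT e by (simp add: field_simps)
      then show ?thesis using pos by (simp add: field_simps)
    qed
    finally have err_ok: "znorm2sq n (\<lambda>x. bitf i x - frestrict n (bitf i) G x) < \<epsilon>" .
    show "\<exists>\<Gamma>. \<Gamma> \<subseteq> {..<n} \<and> real (card \<Gamma>) \<le> P (ln (real n)) (1 / \<epsilon>) \<and>
        znorm2sq n (\<lambda>x. bitf i x - frestrict n (bitf i) \<Gamma> x) < \<epsilon>"
      using Gsub card_ok err_ok by blast
  qed
  show ?thesis unfolding concentrated_def using bip main by blast
qed

end
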